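(* Let $G$ be an alternating directed acyclic graph on $[n]$ with $G^{un}$ connected, and let $d\ge1$. A subgraph $H\subseteq G$ gives a face $\tilde Q_H$ of $\tilde Q_G$ of codimension $d$ if and only if $H^{un}$ has $d+1$ connected components and $E(H)=E(H_1)\cap\dots\cap E(H_d)$ for some subgraphs $H_1,\dots,H_d\subseteq G$ such that each $\tilde Q_{H_i}$ is a facet of $\tilde Q_G$.
   Context: Conventions: $G$ is a directed acyclic graph with vertex set $[n]$, every edge $(i,j)$ satisfying $i<j$; subgraphs $H\subseteq G$ have $V(H)=[n]$, $E(H)\subseteq E(G)$; $^{un}$ denotes underlying undirected graph. $\tilde Q_G=\mathrm{conv}(\{\mathbf 0\}\cup\{\mathbf e_i-\mathbf e_j:(i,j)\in E(G)\})\subset\mathbb R^n$. $G$ is alternating if there is no vertex $j$ with $(i,j),(j,k)\in E(G)$. A facet is a face of codimension 1. *)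

theory Defs
  imports "HOL-Analysis.Analysis"
begin

text \<open>Vertex set: a finite linearly ordered type 'n (order-isomorphic to [n], n = CARD('n)).
  A (directed) graph on it is given by its edge set. Ambient space R^n = real ^ 'n.\<close>

type_synonym 'n digraph = "('n \<times> 'n) set"

definition is_dag_ord :: "('n::linorder) digraph \<Rightarrow> bool" where
  "is_dag_ord G \<longleftrightarrow> (\<forall>(i,j)\<in>G. i < j)"

definition alternating :: "'n digraph \<Rightarrow> bool" where
  "alternating G \<longleftrightarrow> \<not> (\<exists>i j k. (i,j) \<in> G \<and> (j,k) \<in> G)"

definition und_conn :: "'n digraph \<Rightarrow> 'n rel" where
  "und_conn G = (G \<union> G\<inverse>)\<^sup>*"

definition und_components :: "'n digraph \<Rightarrow> 'n set set" where
  "und_components G = UNIV // und_conn G"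

definition und_connected :: "'n digraph \<Rightarrow> bool" where
  "und_connected G \<longleftrightarrow> card (und_components G) = 1"

definition subgraph :: "'n digraph \<Rightarrow> 'n digraph \<Rightarrow> bool" where
  "subgraph H G \<longleftrightarrow> H \<subseteq> G"

definition Qt :: "('n::finite) digraph \<Rightarrow> (real ^ 'n) set" where
  "Qt G = convex hull (insert 0 {axis i 1 - axis j 1 | i j. (i,j) \<in> G})"

definition face_codim :: "(real ^ 'n::finite) set \<Rightarrow> (real ^ 'n) set \<Rightarrow> nat \<Rightarrow> bool" where
  "face_codim F P d \<longleftrightarrow> F face_of P \<and> aff_dim P - aff_dim F = int d"

definition is_facet_of :: "(real ^ 'n::finite) set \<Rightarrow> (real ^ 'n) set \<Rightarrow> bool" where
  "is_facet_of F P \<longleftrightarrow> face_codim F P 1"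

end

theory Submission
  imports Defs
begin


definition gen :: "('n::finite) digraph \<Rightarrow> (real^'n) set" where
  "gen G = insert 0 {axis i 1 - axis j 1 | i j. (i,j) \<in> G}"

lemma Qt_gen: "Qt G = convex hull (gen G)"
  by (simp add: Qt_def gen_def)

lemma finite_gen: "finite (gen (G::('n::finite) digraph))"
proof -
  have "{axis i 1 - axis j 1 | i j. (i,j) \<in> G} = (\<lambda>(i,j). axis i 1 - axis j 1 :: real^'n) ` G"
    by auto
  moreover have "finite G" by (rule finite_subset[of _ UNIV]) auto
  ultimately show ?thesis unfolding gen_def by simp
qed

lemma inner_vv: "(a::real^'n::finite) \<bullet> (axis i 1 - axis j 1) = a$i - a$j"
  by (simp add: inner_diff_right inner_axis)

lemma slice:
  fixes V :: "(real^'n::finite) set"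
  assumes "finite V" "\<And>v. v \<in> V \<Longrightarrow> a \<bullet> v \<le> b"
  shows "convex hull V \<inter> {x. a \<bullet> x = b} = convex hull (V \<inter> {x. a \<bullet> x = b})"
proof
  have hs: "convex hull V \<subseteq> {x. a \<bullet> x \<le> b}"
    by (rule hull_minimal) (use assms(2) convex_halfspace_le in auto)
  have "(convex hull V \<inter> {x. a \<bullet> x = b}) face_of convex hull V"
    by (rule face_of_Int_supporting_hyperplane_le) (use hs in auto)
  then obtain S' where S': "S' \<subseteq> V" "convex hull V \<inter> {x. a \<bullet> x = b} = convex hull S'"
    using face_of_convex_hull_subset[OF finite_imp_compact[OF assms(1)]] by metis
  have "S' \<subseteq> {x. a \<bullet> x = b}" using S'(2) hull_subset[of S' convex] by auto
  then have "convex hull S' \<subseteq> convex hull (V \<inter> {x. a \<bullet> x = b})"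
    using S'(1) by (intro hull_mono) auto
  then show "convex hull V \<inter> {x. a \<bullet> x = b} \<subseteq> convex hull (V \<inter> {x. a \<bullet> x = b})"
    using S'(2) by simp
next
  show "convex hull (V \<inter> {x. a \<bullet> x = b}) \<subseteq> convex hull V \<inter> {x. a \<bullet> x = b}"
  proof -
    have "convex hull (V \<inter> {x. a \<bullet> x = b}) \<subseteq> {x. a \<bullet> x = b}"
      by (rule hull_minimal) (auto simp: convex_hyperplane)
    then show ?thesis using hull_mono[of "V \<inter> {x. a \<bullet> x = b}" V] by auto
  qed
qed

lemma vv_in_Qt: "(i,j) \<in> H \<Longrightarrow> axis i 1 - axis j 1 \<in> Qt H"
  unfolding Qt_gen gen_def by (rule hull_inc) auto

lemma axis_comp: "axis i (x::real) $ j = (if j = i then x else 0)"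
  by (simp add: axis_def)

lemma delta_bound:
  fixes i j k l :: "'n::finite"
  assumes "i \<noteq> j" "k \<noteq> l"
  shows "(axis i 1 - axis j 1 :: real^'n) \<bullet> (axis k 1 - axis l 1) \<le> 2"
    and "(axis i 1 - axis j 1 :: real^'n) \<bullet> (axis k 1 - axis l 1) = 2 \<Longrightarrow> k = i \<and> l = j"
  using assms by (auto simp: inner_vv axis_comp split: if_splits)

lemma EX:
  fixes G H :: "('n::{finite,linorder}) digraph"
  assumes dag: "is_dag_ord G" and HG: "H \<subseteq> G" and e: "(i,j) \<in> G"
    and v: "axis i 1 - axis j 1 \<in> Qt H"
  shows "(i,j) \<in> H"
proof (rule ccontr)
  assume nH: "(i,j) \<notin> H"
  define f where "f = axis i (1::real) - axis j 1"
  have ij: "i \<noteq> j" using dag e unfolding is_dag_ord_def by auto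
  have le: "f \<bullet> v \<le> 2" if "v \<in> gen H" for v
  proof -
    from that consider "v = 0" | k l where "v = axis k 1 - axis l 1" "(k,l) \<in> H"
      unfolding gen_def by auto
    then show ?thesis
    proof cases
      case 2
      then have "k \<noteq> l" using dag HG unfolding is_dag_ord_def by auto
      then show ?thesis using 2 delta_bound(1)[OF ij] f_def by auto
    qed simp
  qed
  have empty: "gen H \<inter> {x. f \<bullet> x = 2} = {}"
  proof (safe)
    fix v assume "v \<in> gen H" "f \<bullet> v = 2"
    then consider "v = 0" | k l where "v = axis k 1 - axis l 1" "(k,l) \<in> H"
      unfolding gen_def by auto
    then show "v \<in> {}"
    proof cases
      case 1 then show ?thesis using \<open>f \<bullet> v = 2\<close> by simp
    next
      case 2
      then have "k \<noteq> l" using dag HG unfolding is_dag_ord_def by auto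
      then have "k = i \<and> l = j" using 2 delta_bound(2)[OF ij] f_def \<open>f \<bullet> v = 2\<close> by auto
      then show ?thesis using 2 nH by auto
    qed
  qed
  have "f \<bullet> f = 2" unfolding f_def using ij by (simp add: inner_vv axis_comp)
  then have "f \<in> Qt H \<inter> {x. f \<bullet> x = 2}" using v f_def by auto
  also have "\<dots> = {}" using slice[OF finite_gen, of H f 2] le empty unfolding Qt_gen by simp
  finally show False by simp
qed

lemma Qt_inj:
  fixes G H1 H2 :: "('n::{finite,linorder}) digraph"
  assumes dag: "is_dag_ord G" and "H1 \<subseteq> G" "H2 \<subseteq> G" "Qt H1 = Qt H2"
  shows "H1 = H2"
proof
  show "H1 \<subseteq> H2"
  proof
    fix e assume "e \<in> H1" then obtain i j where e: "e = (i,j)" "(i,j) \<in> H1" by (cases e) auto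
    show "e \<in> H2" using EX[OF dag assms(3), of i j] vv_in_Qt[OF e(2)] assms e by auto
  qed
  show "H2 \<subseteq> H1"
  proof
    fix e assume "e \<in> H2" then obtain i j where e: "e = (i,j)" "(i,j) \<in> H2" by (cases e) auto
    show "e \<in> H1" using EX[OF dag assms(2), of i j] vv_in_Qt[OF e(2)] assms e by auto
  qed
qed

definition T :: "('n::finite) digraph \<Rightarrow> real^'n \<Rightarrow> 'n digraph" where
  "T G a = {(i,j)\<in>G. a$i = a$j}"

definition monot :: "('n::finite) digraph \<Rightarrow> real^'n \<Rightarrow> bool" where
  "monot G a \<longleftrightarrow> (\<forall>(i,j)\<in>G. a$i \<le> a$j)"

lemma gen_T: "gen G \<inter> {x. a \<bullet> x = 0} = gen (T G a)"
  unfolding gen_def T_def apply (auto simp: inner_vv) by blast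

lemma slice_T:
  assumes "monot G a"
  shows "Qt G \<inter> {x. a \<bullet> x = 0} = Qt (T G a)"
proof -
  have "a \<bullet> v \<le> 0" if "v \<in> gen G" for v
    using that assms unfolding gen_def monot_def by (auto simp: inner_vv)
  then show ?thesis unfolding Qt_gen using slice[OF finite_gen, of G a 0] by (simp add: gen_T)
qed

lemma F1:
  assumes "monot G a"
  shows "Qt (T G a) face_of Qt G"
proof -
  have "a \<bullet> v \<le> 0" if "v \<in> gen G" for v
    using that assms unfolding gen_def monot_def by (auto simp: inner_vv)
  then have "\<And>x. x \<in> Qt G \<Longrightarrow> a \<bullet> x \<le> 0"
    unfolding Qt_gen using hull_minimal[of "gen G" "{x. a \<bullet> x \<le> 0}" convex]
    by (auto simp: convex_halfspace_le)
  then have "(Qt G \<inter> {x. a \<bullet> x = 0}) face_of Qt G"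
    by (intro face_of_Int_supporting_hyperplane_le) (auto simp: Qt_gen)
  then show ?thesis using slice_T[OF assms] by simp
qed

lemma F2:
  fixes G H :: "('n::{finite,linorder}) digraph"
  assumes dag: "is_dag_ord G" and HG: "H \<subseteq> G" and f: "Qt H face_of Qt G"
  shows "\<exists>a. monot G a \<and> H = T G a"
proof -
  have "polyhedron (Qt G)" unfolding Qt_gen
    by (intro polytope_imp_polyhedron polytope_convex_hull finite_gen)
  then have "Qt H exposed_face_of Qt G" using exposed_face_of_polyhedron f by blast
  then obtain a b where ab: "Qt G \<subseteq> {x. a \<bullet> x \<le> b}" "Qt H = Qt G \<inter> {x. a \<bullet> x = b}"
    unfolding exposed_face_of_def by blast
  have "0 \<in> Qt H" unfolding Qt_gen gen_def by (rule hull_inc) simp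
  then have b: "b = 0" using ab(2) by auto
  have m: "monot G a" unfolding monot_def
  proof clarify
    fix i j assume "(i,j) \<in> G"
    then have "axis i 1 - axis j 1 \<in> Qt G" by (rule vv_in_Qt)
    then show "a$i \<le> a$j" using ab(1) b by (auto simp: inner_vv)
  qed
  have "Qt H = Qt (T G a)" using ab(2) b slice_T[OF m] by simp
  moreover have "T G a \<subseteq> G" unfolding T_def by auto
  ultimately have "H = T G a" using Qt_inj[OF dag HG] by blast
  then show ?thesis using m by blast
qed



lemma equiv_uc: "equiv UNIV (und_conn H)"
  unfolding und_conn_def equiv_def
  by (auto simp: refl_on_def sym_rtrancl sym_Un_converse intro: trans_rtrancl)

lemma uc_sym: "(a,b) \<in> und_conn H \<Longrightarrow> (b,a) \<in> und_conn H"
  using equiv_uc[of H] unfolding equiv_def sym_def by blast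

lemma uc_trans: "(a,b) \<in> und_conn H \<Longrightarrow> (b,c) \<in> und_conn H \<Longrightarrow> (a,c) \<in> und_conn H"
  using equiv_uc[of H] unfolding equiv_def trans_def by blast

definition ind :: "'n set \<Rightarrow> real^('n::finite)" where
  "ind C = (\<Sum>i\<in>C. axis i 1)"

lemma ind_comp: "ind C $ k = (if k \<in> C then 1 else 0)"
proof -
  have "finite C" by (rule finite_subset[of _ UNIV]) auto
  then show ?thesis unfolding ind_def by (simp add: axis_comp)
qed

lemma inner_ind: "ind C \<bullet> y = (\<Sum>i\<in>C. y $ i)"
  unfolding ind_def inner_sum_left by (simp add: inner_axis')

lemma vec_expand: "(y::real^'n::finite) = (\<Sum>i\<in>UNIV. y$i *\<^sub>R axis i 1)"
  using basis_expansion[of y] by (simp add: scalar_mult_eq_scaleR)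

lemma path_span:
  assumes "(k,l) \<in> und_conn H"
  shows "axis k 1 - axis l 1 \<in> span (gen H)"
  using assms unfolding und_conn_def
proof (induction rule: rtrancl_induct)
  case base then show ?case by (simp add: span_zero)
next
  case (step l m)
  have "axis l 1 - axis m 1 \<in> span (gen H)"
  proof (cases "(l,m) \<in> H")
    case True then show ?thesis by (intro span_base) (auto simp: gen_def)
  next
    case False
    then have "(m,l) \<in> H" using step by auto
    then have "axis m 1 - axis l 1 \<in> span (gen H)" by (intro span_base) (auto simp: gen_def)
    from span_neg[OF this] show ?thesis by simp
  qed
  from span_add[OF step.IH this] show ?case by simp
qed

definition Wsp :: "('n::finite) digraph \<Rightarrow> (real^'n) set" where
  "Wsp H = {y. \<forall>x\<in>ind ` und_components H. orthogonal x y}"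

lemma cls_in: "und_conn H `` {i} \<in> und_components H"
  unfolding und_components_def by (rule quotientI) simp

lemma span_eq_W: "span (gen H) = Wsp H"
proof
  have sub: "subspace (Wsp H)"
    unfolding Wsp_def subspace_def orthogonal_def by (auto simp: inner_add_right)
  have "gen H \<subseteq> Wsp H"
  proof
    fix v assume "v \<in> gen H"
    then consider "v = 0" | i j where "v = axis i 1 - axis j 1" "(i,j) \<in> H"
      unfolding gen_def by auto
    then show "v \<in> Wsp H"
    proof cases
      case 1 then show ?thesis unfolding Wsp_def orthogonal_def by simp
    next
      case 2
      have "(i,j) \<in> und_conn H" using 2 unfolding und_conn_def by auto
      have "ind C \<bullet> v = 0" if C: "C \<in> und_components H" for C
      proof -
        obtain x where Cx: "C = und_conn H `` {x}" using C unfolding und_components_def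
          by (auto elim: quotientE)
        have "(j,i) \<in> und_conn H" by (rule uc_sym) fact
        then have "i \<in> C \<longleftrightarrow> j \<in> C"
          using \<open>(i,j) \<in> und_conn H\<close> uc_trans[where a=x and b=i and c=j] uc_trans[where a=x and b=j and c=i] Cx by auto
        then show ?thesis using 2 by (simp add: inner_vv ind_comp)
      qed
      then show ?thesis unfolding Wsp_def orthogonal_def by auto
    qed
  qed
  then show "span (gen H) \<subseteq> Wsp H" using span_minimal sub by blast
next
  show "Wsp H \<subseteq> span (gen H)"
  proof
    fix y :: "real^'a" assume y: "y \<in> Wsp H"
    define cls where "cls i = und_conn H `` {i}" for i
    define r where "r i = (SOME k. k \<in> cls i)" for i
    have self: "i \<in> cls i" for i unfolding cls_def und_conn_def by auto
    have rin: "r i \<in> cls i" for i unfolding r_def using self by (metis someI)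
    have clseq: "cls i = cls k \<longleftrightarrow> (i,k) \<in> und_conn H" for i k
      unfolding cls_def using equiv_uc[of H] by (simp add: equiv_class_eq_iff)
    have clsmem: "k \<in> cls i \<longleftrightarrow> (i,k) \<in> und_conn H" for i k unfolding cls_def by simp
    have req: "r i = r i0 \<longleftrightarrow> i \<in> cls i0" for i i0
    proof
      assume "r i = r i0"
      have "(i, r i) \<in> und_conn H" "(i0, r i0) \<in> und_conn H" using rin clsmem by auto
      then have "(i, r i0) \<in> und_conn H" "(i0, r i0) \<in> und_conn H" using \<open>r i = r i0\<close> by auto
      then have "(r i0, i) \<in> und_conn H" using uc_sym by metis
      then have "(i0, i) \<in> und_conn H" using \<open>(i0, r i0) \<in> und_conn H\<close> uc_trans by metis
      then show "i \<in> cls i0" using clsmem by auto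
    next
      assume "i \<in> cls i0"
      then have "(i0,i) \<in> und_conn H" using clsmem by auto
      then have "cls i = cls i0" using clseq uc_sym by metis
      then show "r i = r i0" unfolding r_def by simp
    qed
    have s1: "(\<Sum>i\<in>UNIV. y$i *\<^sub>R (axis i 1 - axis (r i) (1::real))) \<in> span (gen H)"
    proof (rule span_sum)
      fix i
      have "(i, r i) \<in> und_conn H" using rin clsmem by auto
      then show "y$i *\<^sub>R (axis i 1 - axis (r i) (1::real)) \<in> span (gen H)"
        by (intro span_scale path_span)
    qed
    have s2: "(\<Sum>i\<in>UNIV. y$i *\<^sub>R axis (r i) (1::real)) = 0"
    proof (subst vec_eq_iff, intro allI)
      fix k
      have "(\<Sum>i\<in>UNIV. y$i *\<^sub>R axis (r i) (1::real)) $ k = (\<Sum>i\<in>{i. r i = k}. y$i)"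
      proof -
        have "(\<Sum>i\<in>UNIV. y$i *\<^sub>R axis (r i) (1::real)) $ k = (\<Sum>x\<in>UNIV. if r x = k then y$x else 0)"
          by (simp add: axis_comp) (intro sum.cong, auto)
        also have "\<dots> = (\<Sum>i\<in>{i. r i = k}. y$i)"
          using sum.inter_filter[of UNIV "\<lambda>i. y$i" "\<lambda>i. r i = k"] by simp
        finally show ?thesis .
      qed
      also have "\<dots> = 0"
      proof (cases "\<exists>i0. r i0 = k")
        case True
        then obtain i0 where i0: "r i0 = k" by blast
        have "{i. r i = k} = cls i0" using req i0 by auto
        moreover have "cls i0 \<in> und_components H" unfolding cls_def by (rule cls_in)
        ultimately show ?thesis using y unfolding Wsp_def orthogonal_def
          by (auto simp: inner_ind)
      qed simp
      finally show "(\<Sum>i\<in>UNIV. y$i *\<^sub>R axis (r i) (1::real)) $ k = 0 $ k" by (simp only: zero_index)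
    qed
    have "y = (\<Sum>i\<in>UNIV. y$i *\<^sub>R (axis i 1 - axis (r i) (1::real))) + (\<Sum>i\<in>UNIV. y$i *\<^sub>R axis (r i) (1::real))"
      apply (subst vec_expand)
      by (simp add: scaleR_diff_right sum_subtractf)
    then show "y \<in> span (gen H)" using s1 s2 by simp
  qed
qed

lemma dimW: "dim (Wsp H) + card (und_components (H::('n::finite) digraph)) = CARD('n)"
proof -
  define B where "B = ind ` und_components H"
  have disj: "C \<inter> C' = {}" if "C \<in> und_components H" "C' \<in> und_components H" "C \<noteq> C'" for C C'
    using that equiv_uc[of H] unfolding und_components_def by (meson quotient_disj)
  have ne: "C \<noteq> {}" if "C \<in> und_components H" for C
    using that equiv_uc[of H] unfolding und_components_def by (meson in_quotient_imp_non_empty)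
  have inj: "inj_on ind (und_components H)"
  proof (rule inj_onI)
    fix C C' assume "C \<in> und_components H" "C' \<in> und_components H" "ind C = ind C'"
    then have "\<forall>k. (k \<in> C) = (k \<in> C')" by (metis ind_comp one_neq_zero vec_eq_iff)
    then show "C = C'" by auto
  qed
  have po: "pairwise orthogonal B"
    unfolding B_def pairwise_def orthogonal_def
  proof clarify
    fix C C' assume C: "C \<in> und_components H" "C' \<in> und_components H" "ind C \<noteq> ind C'"
    then have "C \<inter> C' = {}" using disj by auto
    then show "ind C \<bullet> ind C' = 0" by (auto simp: inner_ind ind_comp intro!: sum.neutral)
  qed
  have n0: "0 \<notin> B"
  proof
    assume "0 \<in> B" then obtain C where C: "C \<in> und_components H" "ind C = 0" unfolding B_def by auto
    then obtain k where "k \<in> C" using ne by blast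
    then have "ind C $ k = 1" by (simp add: ind_comp)
    then show False using C by simp
  qed
  have indep: "independent B" by (rule pairwise_orthogonal_independent[OF po n0])
  have cardB: "dim (span B) = card (und_components H)"
    using dim_eq_card_independent[OF indep] inj unfolding B_def by (simp add: card_image)
  have eqW: "{y \<in> UNIV. \<forall>x\<in>span B. orthogonal x y} = Wsp H"
  proof
    show "{y \<in> UNIV. \<forall>x\<in>span B. orthogonal x y} \<subseteq> Wsp H"
      unfolding Wsp_def B_def using span_superset by blast
    show "Wsp H \<subseteq> {y \<in> UNIV. \<forall>x\<in>span B. orthogonal x y}"
    proof
      fix y assume yW: "y \<in> Wsp H"
      have h: "\<And>z. z \<in> B \<Longrightarrow> orthogonal y z" using yW
        unfolding Wsp_def B_def by (auto simp: orthogonal_commute)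
      have "orthogonal x y" if "x \<in> span B" for x
      proof -
        have "orthogonal y x" using orthogonal_to_span[of x B y] h that by blast
        then show ?thesis by (simp add: orthogonal_commute)
      qed
      then show "y \<in> {y \<in> UNIV. \<forall>x\<in>span B. orthogonal x y}" by simp
    qed
  qed
  have "dim {y \<in> UNIV. \<forall>x\<in>span B. orthogonal x y} + dim (span B) = dim (UNIV :: (real^'n) set)"
    by (rule dim_subspace_orthogonal_to_vectors) auto
  then show ?thesis using eqW cardB by simp
qed

lemma aff_dim_Qt:
  "aff_dim (Qt (H::('n::finite) digraph)) = int CARD('n) - int (card (und_components H))"
proof -
  have "0 \<in> affine hull gen H" by (rule hull_inc) (simp add: gen_def)
  then have "aff_dim (gen H) = int (dim (gen H))" using aff_dim_eq_dim[of 0 "gen H"] by simp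
  also have "dim (gen H) = dim (Wsp H)" using span_eq_W[of H] dim_span[of "gen H"] by simp
  finally show ?thesis unfolding Qt_gen aff_dim_convex_hull using dimW[of H] by linarith
qed



definition RR :: "('n \<times> 'n) set \<Rightarrow> 'n set \<Rightarrow> ('n \<times> 'n) set" where
  "RR E S = {(x,y). x \<in> S \<and> y \<in> S \<and> ((x,y) \<in> E \<or> (y,x) \<in> E)}"

definition conn :: "('n \<times> 'n) set \<Rightarrow> 'n set \<Rightarrow> bool" where
  "conn E S \<longleftrightarrow> S \<noteq> {} \<and> (\<forall>x\<in>S. \<forall>y\<in>S. (x,y) \<in> (RR E S)\<^sup>*)"

definition ccomp :: "('n \<times> 'n) set \<Rightarrow> 'n set \<Rightarrow> 'n \<Rightarrow> 'n set" where
  "ccomp E S x = {y. (x,y) \<in> (RR E S)\<^sup>*}"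

definition src :: "('n \<times> 'n) set \<Rightarrow> 'n set \<Rightarrow> 'n set \<Rightarrow> bool" where
  "src E U C \<longleftrightarrow> (\<forall>i j. (i,j) \<in> E \<longrightarrow> i \<in> U \<longrightarrow> j \<in> C \<longrightarrow> i \<in> C)"

definition snk :: "('n \<times> 'n) set \<Rightarrow> 'n set \<Rightarrow> 'n set \<Rightarrow> bool" where
  "snk E U C \<longleftrightarrow> (\<forall>i j. (i,j) \<in> E \<longrightarrow> j \<in> U \<longrightarrow> i \<in> C \<longrightarrow> j \<in> C)"

definition adj :: "('n \<times> 'n) set \<Rightarrow> 'n set \<Rightarrow> 'n set \<Rightarrow> bool" where
  "adj E A B \<longleftrightarrow> (\<exists>x\<in>A. \<exists>y\<in>B. (x,y) \<in> E \<or> (y,x) \<in> E)"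

definition part :: "('n \<times> 'n) set \<Rightarrow> ('n \<Rightarrow> real) \<Rightarrow> 'n set \<Rightarrow> 'n set set \<Rightarrow> bool" where
  "part E a U P \<longleftrightarrow> \<Union>P = U \<and> (\<forall>B\<in>P. conn E B) \<and> (\<forall>B\<in>P. \<forall>B'\<in>P. B \<noteq> B' \<longrightarrow> B \<inter> B' = {})
     \<and> (\<forall>B\<in>P. \<forall>x\<in>B. \<forall>y\<in>B. a x = a y)
     \<and> (\<forall>i j. (i,j) \<in> E \<longrightarrow> i \<in> U \<longrightarrow> j \<in> U \<longrightarrow> (\<exists>B\<in>P. i \<in> B \<and> j \<in> B) \<or> a i < a j)"

definition cut :: "('n \<times> 'n) set \<Rightarrow> 'n set \<Rightarrow> 'n set set \<Rightarrow> 'n set \<Rightarrow> bool" where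
  "cut E U P S \<longleftrightarrow> S \<subseteq> U \<and> conn E S \<and> conn E (U - S) \<and> src E U S
     \<and> (\<forall>B\<in>P. B \<subseteq> S \<or> B \<inter> S = {})"

lemma RR_mono: "S \<subseteq> S' \<Longrightarrow> (RR E S)\<^sup>* \<subseteq> (RR E S')\<^sup>*"
  by (rule rtrancl_mono) (auto simp: RR_def)

lemma RR_sym: "(x,y) \<in> (RR E S)\<^sup>* \<Longrightarrow> (y,x) \<in> (RR E S)\<^sup>*"
proof -
  have "sym (RR E S)" unfolding sym_def RR_def by auto
  then have "sym ((RR E S)\<^sup>*)" by (rule sym_rtrancl)
  then show "(x,y) \<in> (RR E S)\<^sup>* \<Longrightarrow> (y,x) \<in> (RR E S)\<^sup>*" unfolding sym_def by blast
qed

lemma RR_conv: "RR (E\<inverse>) S = RR E S"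
  unfolding RR_def by auto

lemma RR_stay: "(x,y) \<in> (RR E S)\<^sup>* \<Longrightarrow> x \<in> S \<Longrightarrow> y \<in> S"
  by (induction rule: rtrancl_induct) (auto simp: RR_def)

lemma RR_restrict:
  assumes "(x,y) \<in> (RR E S)\<^sup>*" "x \<in> V"
    and cl: "\<And>u v. u \<in> V \<Longrightarrow> (u,v) \<in> RR E S \<Longrightarrow> v \<in> V"
  shows "(x,y) \<in> (RR E V)\<^sup>* \<and> y \<in> V"
  using assms(1)
proof (induction rule: rtrancl_induct)
  case base then show ?case using assms(2) by simp
next
  case (step y z)
  then have "z \<in> V" using cl by blast
  moreover have "(y,z) \<in> RR E V" using step \<open>z \<in> V\<close> unfolding RR_def by auto
  moreover have "(x,y) \<in> (RR E V)\<^sup>*" using step.IH by simp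
  ultimately show ?case by (blast intro: rtrancl.rtrancl_into_rtrancl)
qed

lemma first_exit_aux:
  assumes "(u,v) \<in> (RR E U)\<^sup>*" "u \<in> W"
  shows "(\<exists>p q. (u,p) \<in> (RR E W)\<^sup>* \<and> p \<in> W \<and> (p,q) \<in> RR E U \<and> q \<notin> W) \<or> (u,v) \<in> (RR E W)\<^sup>*"
  using assms(1)
proof (induction rule: rtrancl_induct)
  case base then show ?case by simp
next
  case (step y z)
  show ?case
  proof (cases "(u,y) \<in> (RR E W)\<^sup>*")
    case True
    then have yW: "y \<in> W" using RR_stay[OF True assms(2)] by simp
    show ?thesis
    proof (cases "z \<in> W")
      case True
      then have "(y,z) \<in> RR E W" using step(2) yW unfolding RR_def by auto
      then show ?thesis using \<open>(u,y) \<in> (RR E W)\<^sup>*\<close> by (blast intro: rtrancl.rtrancl_into_rtrancl)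
    next
      case False then show ?thesis using \<open>(u,y) \<in> (RR E W)\<^sup>*\<close> yW step(2) by blast
    qed
  next
    case False then show ?thesis using step(3) by blast
  qed
qed

lemma first_exit:
  assumes "(u,v) \<in> (RR E U)\<^sup>*" "u \<in> W" "v \<notin> W"
  shows "\<exists>p q. (u,p) \<in> (RR E W)\<^sup>* \<and> p \<in> W \<and> (p,q) \<in> RR E U \<and> q \<notin> W"
proof -
  have "\<not> (u,v) \<in> (RR E W)\<^sup>*" using RR_stay[of u v E W] assms(2,3) by blast
  then show ?thesis using first_exit_aux[OF assms(1,2)] by blast
qed

lemma conn_union:
  assumes "conn E A" "conn E B" "adj E A B"
  shows "conn E (A \<union> B)"
proof -
  obtain x y where xy: "x \<in> A" "y \<in> B" "(x,y) \<in> E \<or> (y,x) \<in> E" using assms(3) unfolding adj_def by metis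
  have e: "(x,y) \<in> (RR E (A \<union> B))\<^sup>*" using xy by (intro r_into_rtrancl) (auto simp: RR_def)
  have A: "(p,q) \<in> (RR E (A \<union> B))\<^sup>*" if "p \<in> A" "q \<in> A" for p q
  proof -
    have "(p,q) \<in> (RR E A)\<^sup>*" using assms(1) that unfolding conn_def by simp
    then show ?thesis by (rule subsetD[OF RR_mono[of A "A \<union> B" E], rotated]) auto
  qed
  have B: "(p,q) \<in> (RR E (A \<union> B))\<^sup>*" if "p \<in> B" "q \<in> B" for p q
  proof -
    have "(p,q) \<in> (RR E B)\<^sup>*" using assms(2) that unfolding conn_def by simp
    then show ?thesis by (rule subsetD[OF RR_mono[of B "A \<union> B" E], rotated]) auto
  qed
  have all: "(p,q) \<in> (RR E (A \<union> B))\<^sup>*" if "p \<in> A \<union> B" "q \<in> A \<union> B" for p q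
  proof -
    have ex: "(p,x) \<in> (RR E (A \<union> B))\<^sup>*"
    proof (cases "p \<in> A")
      case True then show ?thesis using A[of p x] xy by simp
    next
      case False then have "p \<in> B" using that by simp
      then have "(p,y) \<in> (RR E (A \<union> B))\<^sup>*" using B[of p y] xy by simp
      then show ?thesis using RR_sym[OF e] by (rule rtrancl_trans)
    qed
    have xq: "(x,q) \<in> (RR E (A \<union> B))\<^sup>*"
    proof (cases "q \<in> A")
      case True then show ?thesis using A[of x q] xy by simp
    next
      case False then have "q \<in> B" using that by simp
      then have "(y,q) \<in> (RR E (A \<union> B))\<^sup>*" using B[of y q] xy by simp
      with e show ?thesis by (rule rtrancl_trans)
    qed
    show ?thesis using ex xq by (rule rtrancl_trans)
  qed
  have ne: "A \<union> B \<noteq> {}" using xy by blast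
  show ?thesis unfolding conn_def
  proof (intro conjI ballI)
    show "A \<union> B \<noteq> {}" by (rule ne)
    fix p q assume "p \<in> A \<union> B" "q \<in> A \<union> B"
    then show "(p,q) \<in> (RR E (A \<union> B))\<^sup>*" by (rule all)
  qed
qed

lemma conn_from_comp:
  assumes "x \<in> S" "S \<subseteq> ccomp E S x"
  shows "conn E S"
  unfolding conn_def
proof (intro conjI ballI)
  show "S \<noteq> {}" using assms by auto
  fix p q assume "p \<in> S" "q \<in> S"
  then have "(x,p) \<in> (RR E S)\<^sup>*" "(x,q) \<in> (RR E S)\<^sup>*" using assms unfolding ccomp_def by auto
  then show "(p,q) \<in> (RR E S)\<^sup>*" by (meson RR_sym rtrancl_trans)
qed

lemma ccomp_sub: "x \<in> S \<Longrightarrow> ccomp E S x \<subseteq> S"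
  unfolding ccomp_def using RR_stay[of x _ E S] by auto

lemma ccomp_step: "y \<in> ccomp E S x \<Longrightarrow> (y,z) \<in> RR E S \<Longrightarrow> z \<in> ccomp E S x"
  unfolding ccomp_def by (simp add: rtrancl.rtrancl_into_rtrancl)

lemma conn_conv: "conn (E\<inverse>) S = conn E S"
  unfolding conn_def RR_conv ..

lemma part_conv:
  assumes h: "part E a U P"
  shows "part (E\<inverse>) (\<lambda>x. - a x) U P"
proof -
  have l: "(\<exists>B\<in>P. i \<in> B \<and> j \<in> B) \<or> - a i < - a j"
    if "(i,j) \<in> E\<inverse>" "i \<in> U" "j \<in> U" for i j
  proof -
    have "(j,i) \<in> E" using that by simp
    then have "(\<exists>B\<in>P. j \<in> B \<and> i \<in> B) \<or> a j < a i"
      using h that unfolding part_def by blast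
    then show ?thesis by auto
  qed
  have h1: "\<Union>P = U" using h unfolding part_def by (elim conjE) assumption
  have h2: "\<forall>B\<in>P. conn E B" using h unfolding part_def by (elim conjE) assumption
  have h3: "\<forall>B\<in>P. \<forall>B'\<in>P. B \<noteq> B' \<longrightarrow> B \<inter> B' = {}"
    using h unfolding part_def by (elim conjE) assumption
  have h4: "\<forall>B\<in>P. \<forall>x\<in>B. \<forall>y\<in>B. a x = a y" using h unfolding part_def by (elim conjE) assumption
  show ?thesis unfolding part_def conn_conv
  proof (intro conjI)
    show "\<Union>P = U" by (rule h1)
    show "\<forall>B\<in>P. conn E B" by (rule h2)
    show "\<forall>B\<in>P. \<forall>B'\<in>P. B \<noteq> B' \<longrightarrow> B \<inter> B' = {}" by (rule h3)
    show "\<forall>B\<in>P. \<forall>x\<in>B. \<forall>y\<in>B. - a x = - a y"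
    proof (intro ballI)
      fix B x y assume "B \<in> P" "x \<in> B" "y \<in> B"
      then have "a x = a y" using h4 by blast
      then show "- a x = - a y" by simp
    qed
    show "\<forall>i j. (i,j) \<in> E\<inverse> \<longrightarrow> i \<in> U \<longrightarrow> j \<in> U \<longrightarrow> (\<exists>B\<in>P. i \<in> B \<and> j \<in> B) \<or> - a i < - a j"
      using l by blast
  qed
qed

lemma src_conv: "src (E\<inverse>) U C = snk E U C"
  unfolding src_def snk_def by auto

lemma snk_conv: "snk (E\<inverse>) U C = src E U C"
  unfolding src_def snk_def by auto

lemma ccomp_conv: "ccomp (E\<inverse>) S x = ccomp E S x"
  unfolding ccomp_def RR_conv ..



lemma partD1: "part E a U P \<Longrightarrow> \<Union>P = U"
  unfolding part_def by (elim conjE) assumption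

lemma partD2: "part E a U P \<Longrightarrow> B \<in> P \<Longrightarrow> conn E B"
  unfolding part_def by (elim conjE) (erule bspec)

lemma partD3: "part E a U P \<Longrightarrow> B \<in> P \<Longrightarrow> B' \<in> P \<Longrightarrow> B \<noteq> B' \<Longrightarrow> B \<inter> B' = {}"
  unfolding part_def by (elim conjE) (drule bspec, assumption, drule bspec, assumption, erule mp)

lemma partD4: "part E a U P \<Longrightarrow> B \<in> P \<Longrightarrow> x \<in> B \<Longrightarrow> y \<in> B \<Longrightarrow> a x = a y"
  unfolding part_def by (elim conjE) (drule bspec, assumption, drule bspec, assumption, drule bspec, assumption)

lemma partD5: "part E a U P \<Longrightarrow> (i,j) \<in> E \<Longrightarrow> i \<in> U \<Longrightarrow> j \<in> U \<Longrightarrow> (\<exists>B\<in>P. i \<in> B \<and> j \<in> B) \<or> a i < a j"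
  unfolding part_def by (elim conjE) (drule spec, drule spec, drule mp, assumption, drule mp, assumption, drule mp, assumption)

lemma conn_ne: "conn E S \<Longrightarrow> S \<noteq> {}"
  unfolding conn_def by simp

lemma conn_D: "conn E S \<Longrightarrow> x \<in> S \<Longrightarrow> y \<in> S \<Longrightarrow> (x,y) \<in> (RR E S)\<^sup>*"
  unfolding conn_def by blast

lemma block_of:
  assumes "part E a U P" "x \<in> U"
  obtains B where "B \<in> P" "x \<in> B"
  using partD1[OF assms(1)] assms(2) by blast

lemma block_sub: "part E a U P \<Longrightarrow> B \<in> P \<Longrightarrow> B \<subseteq> U"
  using partD1 by blast

lemma block_sub_comp:
  assumes "part E a U P" "B \<in> P" "B \<subseteq> W" "b \<in> B" "b \<in> ccomp E W x"
  shows "B \<subseteq> ccomp E W x"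
proof
  fix b' assume "b' \<in> B"
  then have "(b,b') \<in> (RR E B)\<^sup>*" by (rule conn_D[OF partD2[OF assms(1,2)] assms(4)])
  then have "(b,b') \<in> (RR E W)\<^sup>*" by (rule subsetD[OF RR_mono[OF assms(3)]])
  moreover have "(x,b) \<in> (RR E W)\<^sup>*" using assms(5) unfolding ccomp_def by simp
  ultimately show "b' \<in> ccomp E W x" unfolding ccomp_def mem_Collect_eq by (rule rtrancl_trans[rotated])
qed

lemma x_in_comp: "x \<in> ccomp E S x"
  unfolding ccomp_def by simp

lemma SL:
  fixes E :: "('n::finite \<times> 'n) set"
  assumes p: "part E a U P" and C: "C \<in> P" and s: "snk E U C" and x: "x \<in> U - C"
  shows "\<exists>A\<in>P. A \<subseteq> ccomp E (U - C) x \<and> src E U A"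
proof -
  define K where "K = ccomp E (U - C) x"
  have xK: "x \<in> K" unfolding K_def by (rule x_in_comp)
  have KU: "K \<subseteq> U - C" unfolding K_def using ccomp_sub[of x "U - C" E] x by simp
  have fin: "finite (a ` K)" by simp
  have "Min (a ` K) \<in> a ` K" using xK fin by (intro Min_in) auto
  then obtain m where mK: "m \<in> K" and am: "a m = Min (a ` K)" by auto
  have mmin: "a m \<le> a k" if "k \<in> K" for k using am that fin by simp
  have mU: "m \<in> U" using mK KU by blast
  obtain A where A: "A \<in> P" "m \<in> A" using block_of[OF p mU] by blast
  have AC: "A \<noteq> C" using A mK KU by blast
  have AUC: "A \<subseteq> U - C" using block_sub[OF p A(1)] partD3[OF p A(1) C AC] by blast
  have AK: "A \<subseteq> K" unfolding K_def using block_sub_comp[OF p A(1) AUC A(2)] mK K_def by blast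
  have "src E U A" unfolding src_def
  proof (intro allI impI)
    fix i j assume ij: "(i,j) \<in> E" "i \<in> U" "j \<in> A"
    have jK: "j \<in> K" using ij AK by blast
    have jU: "j \<in> U - C" using jK KU by blast
    have iC: "i \<notin> C"
    proof
      assume "i \<in> C"
      then have "j \<in> C" using s ij jU unfolding snk_def by blast
      then show False using jU by blast
    qed
    have "(j,i) \<in> RR E (U - C)" using ij iC jU unfolding RR_def by blast
    then have iK: "i \<in> K" unfolding K_def by (rule ccomp_step[OF jK[unfolded K_def]])
    have "(\<exists>B\<in>P. i \<in> B \<and> j \<in> B) \<or> a i < a j" using partD5[OF p ij(1,2)] jU by blast
    then show "i \<in> A"
    proof
      assume "\<exists>B\<in>P. i \<in> B \<and> j \<in> B"
      then obtain B where B: "B \<in> P" "i \<in> B" "j \<in> B" by blast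
      have "B = A" using partD3[OF p B(1) A(1)] B(3) ij(3) by blast
      then show "i \<in> A" using B by simp
    next
      assume "a i < a j"
      moreover have "a j = a m" using partD4[OF p A(1) ij(3) A(2)] .
      moreover have "a m \<le> a i" using mmin iK by blast
      ultimately show "i \<in> A" by simp
    qed
  qed
  then show ?thesis using A(1) AK K_def by blast
qed

lemma adj_exists:
  assumes "conn E U" "C \<subseteq> U" "C \<noteq> {}" "U - C \<noteq> {}"
  shows "adj E C (U - C)"
proof -
  obtain c u where c: "c \<in> C" and u: "u \<in> U - C" using assms(3,4) by blast
  have cu: "(c,u) \<in> (RR E U)\<^sup>*" using c u assms(2) by (intro conn_D[OF assms(1)]) auto
  have "u \<notin> C" using u by simp
  then obtain p q where pq: "(c,p) \<in> (RR E C)\<^sup>*" "p \<in> C" "(p,q) \<in> RR E U" "q \<notin> C"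
    using first_exit[OF cu c] by metis
  then show ?thesis unfolding adj_def RR_def by blast
qed



lemma source_block:
  fixes E :: "('n::finite \<times> 'n) set"
  assumes p: "part E a U P" and ne: "U \<noteq> {}"
  shows "\<exists>C\<in>P. src E U C"
proof -
  have fin: "finite (a ` U)" by simp
  have "Min (a ` U) \<in> a ` U" using ne fin by (intro Min_in) auto
  then obtain m where mU: "m \<in> U" and am: "a m = Min (a ` U)" by auto
  have mmin: "a m \<le> a k" if "k \<in> U" for k using am that fin by simp
  obtain C where C: "C \<in> P" "m \<in> C" using block_of[OF p mU] by blast
  have "src E U C" unfolding src_def
  proof (intro allI impI)
    fix i j assume ij: "(i,j) \<in> E" "i \<in> U" "j \<in> C"
    have jU: "j \<in> U" using block_sub[OF p C(1)] ij(3) by blast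
    have "(\<exists>B\<in>P. i \<in> B \<and> j \<in> B) \<or> a i < a j" using partD5[OF p ij(1,2) jU] .
    then show "i \<in> C"
    proof
      assume "\<exists>B\<in>P. i \<in> B \<and> j \<in> B"
      then obtain B where B: "B \<in> P" "i \<in> B" "j \<in> B" by blast
      have "B = C" using partD3[OF p B(1) C(1)] B(3) ij(3) by blast
      then show "i \<in> C" using B by simp
    next
      assume "a i < a j"
      moreover have "a j = a m" using partD4[OF p C(1) ij(3) C(2)] .
      moreover have "a m \<le> a i" using mmin ij(2) by blast
      ultimately show "i \<in> C" by simp
    qed
  qed
  then show ?thesis using C(1) by blast
qed

lemma two_blocks:
  fixes E :: "('n::finite \<times> 'n) set"
  assumes p: "part E a U P" and c: "2 \<le> card P" and C: "C \<in> P"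
  shows "U - C \<noteq> {}"
proof -
  have "\<exists>B\<in>P. B \<noteq> C"
  proof (rule ccontr)
    assume "\<not> (\<exists>B\<in>P. B \<noteq> C)"
    then have "P \<subseteq> {C}" by blast
    then have "card P \<le> card {C}" by (intro card_mono) simp_all
    then have "card P \<le> 1" by simp
    then show False using c by simp
  qed
  then obtain B where B: "B \<in> P" "B \<noteq> C" by blast
  have "B \<noteq> {}" using conn_ne[OF partD2[OF p B(1)]] .
  moreover have "B \<subseteq> U - C" using block_sub[OF p B(1)] partD3[OF p B(1) C B(2)] by blast
  ultimately show ?thesis by blast
qed

lemma KL:
  fixes E :: "('n::finite \<times> 'n) set"
  assumes p: "part E a U P" and cU: "conn E U" and c2: "2 \<le> card P"
  shows "\<exists>C\<in>P. conn E (U - C) \<and> (src E U C \<or> snk E U C)"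
proof (rule ccontr)
  assume NC: "\<not> (\<exists>C\<in>P. conn E (U - C) \<and> (src E U C \<or> snk E U C))"
  define Q where "Q = (\<lambda>(C,x). C \<in> P \<and> (src E U C \<or> snk E U C) \<and> x \<in> U - C)"
  define f where "f = (\<lambda>(C,x). card (ccomp E (U - C) x))"
  obtain C0 where C0: "C0 \<in> P" "src E U C0" using source_block[OF p conn_ne[OF cU]] by blast
  obtain x0 where "x0 \<in> U - C0" using two_blocks[OF p c2 C0(1)] by blast
  then have "Q (C0,x0)" unfolding Q_def using C0 by simp
  then obtain Cx where QCx: "Q Cx" and minC: "\<And>D. Q D \<Longrightarrow> f Cx \<le> f D"
    using ex_has_least_nat[of Q "(C0,x0)" f] by blast
  obtain C x where Cx: "Cx = (C,x)" by (cases Cx)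
  have C: "C \<in> P" and Css: "src E U C \<or> snk E U C" and x: "x \<in> U - C"
    using QCx Cx unfolding Q_def by auto
  define K where "K = ccomp E (U - C) x"
  have xK: "x \<in> K" unfolding K_def by (rule x_in_comp)
  have KU: "K \<subseteq> U - C" unfolding K_def using ccomp_sub[of x "U - C" E] x by simp
  have ncC: "\<not> conn E (U - C)" using NC C Css by blast
  have "\<exists>z\<in>U - C. z \<notin> K"
  proof (rule ccontr)
    assume "\<not> (\<exists>z\<in>U - C. z \<notin> K)"
    then have "U - C \<subseteq> ccomp E (U - C) x" unfolding K_def by blast
    then have "conn E (U - C)" by (rule conn_from_comp[OF x])
    then show False using ncC by simp
  qed
  obtain A where A: "A \<in> P" "A \<subseteq> K" and Ass: "src E U A \<or> snk E U A"
  proof (cases "snk E U C")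
    case True
    then show ?thesis using SL[OF p C True x] that unfolding K_def by blast
  next
    case False
    then have "src E U C" using Css by simp
    then have "snk (E\<inverse>) U C" by (simp add: snk_conv)
    from SL[OF part_conv[OF p] C this x] obtain A where
      "A \<in> P" "A \<subseteq> ccomp (E\<inverse>) (U - C) x" "src (E\<inverse>) U A" by blast
    then show ?thesis using that unfolding K_def ccomp_conv src_conv by blast
  qed
  have ncA: "\<not> conn E (U - A)" using NC A(1) Ass by blast
  obtain c0 where c0: "c0 \<in> C" using conn_ne[OF partD2[OF p C]] by blast
  have CU: "C \<subseteq> U" using block_sub[OF p C] .
  have AC: "A \<inter> C = {}" using A(2) KU by blast
  have CUA: "C \<subseteq> U - A" using CU AC by blast
  have inC: "(w,c0) \<in> (RR E (U - A))\<^sup>*" if "w \<in> C" for w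
  proof -
    have "(w,c0) \<in> (RR E C)\<^sup>*" using that c0 by (rule conn_D[OF partD2[OF p C]])
    then show ?thesis by (rule subsetD[OF RR_mono[OF CUA]])
  qed
  have CL1: "(w,c0) \<in> (RR E (U - A))\<^sup>*" if w: "w \<in> U" "w \<notin> K" for w
  proof (cases "w \<in> C")
    case True then show ?thesis by (rule inC)
  next
    case False
    have wc: "(w,c0) \<in> (RR E U)\<^sup>*" using w(1) c0 CU by (intro conn_D[OF cU]) auto
    have wW: "w \<in> U - C" using w False by simp
    have cW: "c0 \<notin> U - C" using c0 by simp
    obtain p q where pq: "(w,p) \<in> (RR E (U - C))\<^sup>*" "p \<in> U - C" "(p,q) \<in> RR E U" "q \<notin> U - C"
      using first_exit[OF wc wW cW] by metis
    have qC: "q \<in> C" using pq(3,4) unfolding RR_def by blast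
    define V where "V = U - C - K"
    have wV: "w \<in> V" unfolding V_def using wW w(2) by simp
    have cl: "v \<in> V" if "u \<in> V" "(u,v) \<in> RR E (U - C)" for u v
    proof -
      have vUC: "v \<in> U - C" using that(2) unfolding RR_def by blast
      have "v \<notin> K"
      proof
        assume "v \<in> K"
        have "(v,u) \<in> RR E (U - C)" using that(2) unfolding RR_def by blast
        then have "u \<in> K" unfolding K_def by (rule ccomp_step[OF \<open>v \<in> K\<close>[unfolded K_def]])
        then show False using that(1) unfolding V_def by simp
      qed
      then show ?thesis unfolding V_def using vUC by simp
    qed
    have r: "(w,p) \<in> (RR E V)\<^sup>* \<and> p \<in> V" by (rule RR_restrict[OF pq(1) wV cl])
    have VUA: "V \<subseteq> U - A" unfolding V_def using A(2) by blast
    have wp: "(w,p) \<in> (RR E (U - A))\<^sup>*" using r by (intro subsetD[OF RR_mono[OF VUA]]) simp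
    have "(p,q) \<in> RR E (U - A)" using pq(3) r VUA qC CUA unfolding RR_def by blast
    then have pq': "(p,q) \<in> (RR E (U - A))\<^sup>*" by (rule r_into_rtrancl)
    have qc: "(q,c0) \<in> (RR E (U - A))\<^sup>*" using qC by (rule inC)
    show ?thesis by (rule rtrancl_trans[OF rtrancl_trans[OF wp pq'] qc])
  qed
  have "\<exists>y\<in>U - A. (y,c0) \<notin> (RR E (U - A))\<^sup>*"
  proof (rule ccontr)
    assume "\<not> (\<exists>y\<in>U - A. (y,c0) \<notin> (RR E (U - A))\<^sup>*)"
    then have all: "(y,c0) \<in> (RR E (U - A))\<^sup>*" if "y \<in> U - A" for y using that by blast
    have "conn E (U - A)" unfolding conn_def
    proof (intro conjI ballI)
      show "U - A \<noteq> {}" using c0 CUA by blast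
      fix p q assume "p \<in> U - A" "q \<in> U - A"
      then show "(p,q) \<in> (RR E (U - A))\<^sup>*"
        using rtrancl_trans[OF all[of p] RR_sym[OF all[of q]]] by simp
    qed
    then show False using ncA by simp
  qed
  then obtain y where y: "y \<in> U - A" "(y,c0) \<notin> (RR E (U - A))\<^sup>*" by blast
  have yK: "y \<in> K" using CL1 y by blast
  define K' where "K' = ccomp E (U - A) y"
  have K'sub: "K' \<subseteq> K - A"
  proof
    fix v assume v: "v \<in> K'"
    have vUA: "v \<in> U - A" using v ccomp_sub[of y "U - A" E] y(1) unfolding K'_def by blast
    have "v \<in> K"
    proof (rule ccontr)
      assume "v \<notin> K"
      then have "(v,c0) \<in> (RR E (U - A))\<^sup>*" using CL1 vUA by blast
      moreover have "(y,v) \<in> (RR E (U - A))\<^sup>*" using v unfolding K'_def ccomp_def by simp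
      ultimately have "(y,c0) \<in> (RR E (U - A))\<^sup>*" by (rule rtrancl_trans[rotated])
      then show False using y(2) by simp
    qed
    then show "v \<in> K - A" using vUA by simp
  qed
  have "A \<noteq> {}" using conn_ne[OF partD2[OF p A(1)]] .
  then have "K - A \<subset> K" using A(2) by blast
  then have "card (K - A) < card K" by (intro psubset_card_mono) simp_all
  moreover have "card K' \<le> card (K - A)" using K'sub by (intro card_mono) simp_all
  ultimately have lt: "card K' < card K" by simp
  have "Q (A,y)" unfolding Q_def using A(1) Ass y(1) by simp
  then have "f Cx \<le> f (A,y)" by (rule minC)
  then have "card K \<le> card K'" unfolding f_def Cx K_def K'_def by simp
  then show False using lt by simp
qed



lemma adj_split:
  assumes "adj E C (U - C)" "\<not> adj E C S'" "S' \<subseteq> U - C"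
  shows "adj E C (U - C - S')"
  using assms unfolding adj_def by blast

lemma EXTsrc:
  fixes E :: "('n::finite \<times> 'n) set"
  assumes p: "part E a U P" and C: "C \<in> P" and s: "src E U C" and cU: "conn E U"
    and cUC: "conn E (U - C)" and cut': "cut E (U - C) (P - {C}) S'"
  shows "\<exists>S. cut E U P S \<and> S \<inter> (U - C) = S'"
proof -
  have CU: "C \<subseteq> U" using block_sub[OF p C] .
  have cC: "conn E C" using partD2[OF p C] .
  have S'U: "S' \<subseteq> U - C" and cS': "conn E S'" and cT': "conn E (U - C - S')"
    and sS': "src E (U - C) S'" and bS': "\<forall>B\<in>P - {C}. B \<subseteq> S' \<or> B \<inter> S' = {}"
    using cut' unfolding cut_def by auto
  have adjC: "adj E C (U - C)" using adj_exists[OF cU CU conn_ne[OF cC] conn_ne[OF cUC]] .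
  have blocks: "B \<subseteq> S' \<or> B \<inter> S' = {}" "B \<inter> C = {}" if "B \<in> P" "B \<noteq> C" for B
    using bS' that partD3[OF p that(1) C that(2)] by auto
  show ?thesis
  proof (cases "adj E C S'")
    case True
    define S where "S = S' \<union> C"
    have "cut E U P S" unfolding cut_def
    proof (intro conjI)
      show "S \<subseteq> U" unfolding S_def using S'U CU by blast
      show "conn E S" unfolding S_def using conn_union[OF cC cS' True] by (simp add: Un_commute)
      have "U - S = U - C - S'" unfolding S_def by blast
      then show "conn E (U - S)" using cT' by simp
      show "src E U S" unfolding src_def
      proof (intro allI impI)
        fix i j assume ij: "(i,j) \<in> E" "i \<in> U" "j \<in> S"
        show "i \<in> S"
        proof (cases "j \<in> C")
          case True then show ?thesis using s ij unfolding src_def S_def by blast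
        next
          case False
          then have "j \<in> S'" using ij unfolding S_def by blast
          then show ?thesis using sS' ij unfolding src_def S_def by blast
        qed
      qed
      show "\<forall>B\<in>P. B \<subseteq> S \<or> B \<inter> S = {}"
      proof
        fix B assume B: "B \<in> P"
        show "B \<subseteq> S \<or> B \<inter> S = {}"
        proof (cases "B = C")
          case True then show ?thesis unfolding S_def by blast
        next
          case False then show ?thesis using blocks[OF B False] unfolding S_def by blast
        qed
      qed
    qed
    moreover have "S \<inter> (U - C) = S'" unfolding S_def using S'U by blast
    ultimately show ?thesis by blast
  next
    case False
    have adjT: "adj E C (U - C - S')" using adj_split[OF adjC False S'U] .
    have "cut E U P S'" unfolding cut_def
    proof (intro conjI)
      show "S' \<subseteq> U" using S'U by blast
      show "conn E S'" by (rule cS')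
      have "U - S' = (U - C - S') \<union> C" using CU S'U by blast
      then show "conn E (U - S')" using conn_union[OF cC cT' adjT] by (simp add: Un_commute)
      show "src E U S'" unfolding src_def
      proof (intro allI impI)
        fix i j assume ij: "(i,j) \<in> E" "i \<in> U" "j \<in> S'"
        have "i \<notin> C" using False ij unfolding adj_def by blast
        then show "i \<in> S'" using sS' ij unfolding src_def by blast
      qed
      show "\<forall>B\<in>P. B \<subseteq> S' \<or> B \<inter> S' = {}"
      proof
        fix B assume B: "B \<in> P"
        show "B \<subseteq> S' \<or> B \<inter> S' = {}"
        proof (cases "B = C")
          case True then show ?thesis using S'U by blast
        next
          case False then show ?thesis using blocks[OF B False] by blast
        qed
      qed
    qed
    moreover have "S' \<inter> (U - C) = S'" using S'U by blast
    ultimately show ?thesis by blast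
  qed
qed

lemma EXTsnk:
  fixes E :: "('n::finite \<times> 'n) set"
  assumes p: "part E a U P" and C: "C \<in> P" and s: "snk E U C" and cU: "conn E U"
    and cUC: "conn E (U - C)" and cut': "cut E (U - C) (P - {C}) S'"
  shows "\<exists>S. cut E U P S \<and> S \<inter> (U - C) = S'"
proof -
  have CU: "C \<subseteq> U" using block_sub[OF p C] .
  have cC: "conn E C" using partD2[OF p C] .
  have S'U: "S' \<subseteq> U - C" and cS': "conn E S'" and cT': "conn E (U - C - S')"
    and sS': "src E (U - C) S'" and bS': "\<forall>B\<in>P - {C}. B \<subseteq> S' \<or> B \<inter> S' = {}"
    using cut' unfolding cut_def by auto
  have adjC: "adj E C (U - C)" using adj_exists[OF cU CU conn_ne[OF cC] conn_ne[OF cUC]] .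
  have blocks: "B \<subseteq> S' \<or> B \<inter> S' = {}" "B \<inter> C = {}" if "B \<in> P" "B \<noteq> C" for B
    using bS' that partD3[OF p that(1) C that(2)] by auto
  show ?thesis
  proof (cases "adj E C (U - C - S')")
    case True
    have "cut E U P S'" unfolding cut_def
    proof (intro conjI)
      show "S' \<subseteq> U" using S'U by blast
      show "conn E S'" by (rule cS')
      have "U - S' = (U - C - S') \<union> C" using CU S'U by blast
      then show "conn E (U - S')" using conn_union[OF cC cT' True] by (simp add: Un_commute)
      show "src E U S'" unfolding src_def
      proof (intro allI impI)
        fix i j assume ij: "(i,j) \<in> E" "i \<in> U" "j \<in> S'"
        have "i \<notin> C"
        proof
          assume "i \<in> C"
          then have "j \<in> C" using s ij S'U unfolding snk_def by blast
          then show False using ij S'U by blast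
        qed
        then show "i \<in> S'" using sS' ij unfolding src_def by blast
      qed
      show "\<forall>B\<in>P. B \<subseteq> S' \<or> B \<inter> S' = {}"
      proof
        fix B assume B: "B \<in> P"
        show "B \<subseteq> S' \<or> B \<inter> S' = {}"
        proof (cases "B = C")
          case True then show ?thesis using S'U by blast
        next
          case False then show ?thesis using blocks[OF B False] by blast
        qed
      qed
    qed
    moreover have "S' \<inter> (U - C) = S'" using S'U by blast
    ultimately show ?thesis by blast
  next
    case False
    have adjS: "adj E C S'" using adjC False S'U unfolding adj_def by blast
    define S where "S = S' \<union> C"
    have "cut E U P S" unfolding cut_def
    proof (intro conjI)
      show "S \<subseteq> U" unfolding S_def using S'U CU by blast
      show "conn E S" unfolding S_def using conn_union[OF cC cS' adjS] by (simp add: Un_commute)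
      have "U - S = U - C - S'" unfolding S_def by blast
      then show "conn E (U - S)" using cT' by simp
      show "src E U S" unfolding src_def
      proof (intro allI impI)
        fix i j assume ij: "(i,j) \<in> E" "i \<in> U" "j \<in> S"
        show "i \<in> S"
        proof (cases "j \<in> C")
          case True
          show ?thesis
          proof (cases "i \<in> C")
            case True then show ?thesis unfolding S_def by blast
          next
            case iC: False
            have "i \<notin> U - C - S'" using False ij True iC unfolding adj_def by blast
            then show ?thesis using ij iC unfolding S_def by blast
          qed
        next
          case False
          then have "j \<in> S'" using ij unfolding S_def by blast
          show ?thesis
          proof (cases "i \<in> C")
            case True then show ?thesis unfolding S_def by blast
          next
            case False
            then show ?thesis using sS' ij \<open>j \<in> S'\<close> unfolding src_def S_def by blast
          qed
        qed
      qed
      show "\<forall>B\<in>P. B \<subseteq> S \<or> B \<inter> S = {}"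
      proof
        fix B assume B: "B \<in> P"
        show "B \<subseteq> S \<or> B \<inter> S = {}"
        proof (cases "B = C")
          case True then show ?thesis unfolding S_def by blast
        next
          case False then show ?thesis using blocks[OF B False] unfolding S_def by blast
        qed
      qed
    qed
    moreover have "S \<inter> (U - C) = S'" unfolding S_def using S'U by blast
    ultimately show ?thesis by blast
  qed
qed



lemma part_remove:
  assumes p: "part E a U P" and C: "C \<in> P"
  shows "part E a (U - C) (P - {C})"
  unfolding part_def
proof (intro conjI)
  show "\<Union>(P - {C}) = U - C"
  proof
    show "\<Union>(P - {C}) \<subseteq> U - C"
    proof
      fix x assume "x \<in> \<Union>(P - {C})"
      then obtain B where B: "B \<in> P" "B \<noteq> C" "x \<in> B" by blast
      have "x \<in> U" using block_sub[OF p B(1)] B(3) by blast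
      moreover have "x \<notin> C" using partD3[OF p B(1) C B(2)] B(3) by blast
      ultimately show "x \<in> U - C" by simp
    qed
    show "U - C \<subseteq> \<Union>(P - {C})"
    proof
      fix x assume x: "x \<in> U - C"
      then obtain B where B: "B \<in> P" "x \<in> B" using block_of[OF p] by blast
      then have "B \<noteq> C" using x by blast
      then show "x \<in> \<Union>(P - {C})" using B by blast
    qed
  qed
  show "\<forall>B\<in>P - {C}. conn E B" using partD2[OF p] by blast
  show "\<forall>B\<in>P - {C}. \<forall>B'\<in>P - {C}. B \<noteq> B' \<longrightarrow> B \<inter> B' = {}" using partD3[OF p] by blast
  show "\<forall>B\<in>P - {C}. \<forall>x\<in>B. \<forall>y\<in>B. a x = a y"
  proof (intro ballI)
    fix B x y assume "B \<in> P - {C}" "x \<in> B" "y \<in> B"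
    then show "a x = a y" using partD4[OF p, of B x y] by blast
  qed
  show "\<forall>i j. (i,j) \<in> E \<longrightarrow> i \<in> U - C \<longrightarrow> j \<in> U - C \<longrightarrow> (\<exists>B\<in>P - {C}. i \<in> B \<and> j \<in> B) \<or> a i < a j"
  proof (intro allI impI)
    fix i j assume ij: "(i,j) \<in> E" "i \<in> U - C" "j \<in> U - C"
    have "(\<exists>B\<in>P. i \<in> B \<and> j \<in> B) \<or> a i < a j" using partD5[OF p ij(1)] ij(2,3) by blast
    then show "(\<exists>B\<in>P - {C}. i \<in> B \<and> j \<in> B) \<or> a i < a j" using ij(2) by blast
  qed
qed

lemma CL:
  fixes E :: "('n::finite \<times> 'n) set"
  shows "part E a U P \<Longrightarrow> conn E U \<Longrightarrow> \<exists>Ss. length Ss + 1 = card P \<and> (\<forall>S\<in>set Ss. cut E U P S) \<and>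
    (\<forall>i j. (i,j) \<in> E \<longrightarrow> i \<in> U \<longrightarrow> j \<in> U \<longrightarrow> (\<exists>B\<in>P. i \<in> B \<and> j \<in> B) \<or> (\<exists>S\<in>set Ss. (i \<in> S) \<noteq> (j \<in> S)))"
proof (induction "card P" arbitrary: U P rule: less_induct)
  case less
  note p = less.prems(1) and cU = less.prems(2)
  have Une: "U \<noteq> {}" using conn_ne[OF cU] .
  have Pne: "P \<noteq> {}" using partD1[OF p] Une by blast
  have finP: "finite P" by simp
  then have c1: "1 \<le> card P" using Pne by (simp add: Suc_le_eq card_gt_0_iff)
  show ?case
  proof (cases "card P = 1")
    case True
    then obtain B where PB: "P = {B}" by (rule card_1_singletonE)
    have UB: "U = B" using partD1[OF p] PB by simp
    show ?thesis
      by (rule exI[of _ "[]"]) (use True PB UB in auto)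
  next
    case False
    then have c2: "2 \<le> card P" using c1 by simp
    obtain C where C: "C \<in> P" and cUC: "conn E (U - C)" and ss: "src E U C \<or> snk E U C"
      using KL[OF p cU c2] by blast
    have p': "part E a (U - C) (P - {C})" by (rule part_remove[OF p C])
    have cardP': "card (P - {C}) = card P - 1" using C by simp
    then have "card (P - {C}) < card P" using c2 by simp
    then obtain Ss' where len': "length Ss' + 1 = card (P - {C})"
      and cuts': "\<forall>S\<in>set Ss'. cut E (U - C) (P - {C}) S"
      and cov': "\<forall>i j. (i,j) \<in> E \<longrightarrow> i \<in> U - C \<longrightarrow> j \<in> U - C \<longrightarrow>
           (\<exists>B\<in>P - {C}. i \<in> B \<and> j \<in> B) \<or> (\<exists>S\<in>set Ss'. (i \<in> S) \<noteq> (j \<in> S))"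
      using less.hyps[OF _ p' cUC] by blast
    have "\<forall>S'\<in>set Ss'. \<exists>S. cut E U P S \<and> S \<inter> (U - C) = S'"
    proof
      fix S' assume "S' \<in> set Ss'"
      then have ct: "cut E (U - C) (P - {C}) S'" using cuts' by blast
      show "\<exists>S. cut E U P S \<and> S \<inter> (U - C) = S'"
      proof (cases "src E U C")
        case True then show ?thesis by (rule EXTsrc[OF p C _ cU cUC ct])
      next
        case False then have "snk E U C" using ss by simp
        then show ?thesis by (rule EXTsnk[OF p C _ cU cUC ct])
      qed
    qed
    then obtain g where g: "\<forall>S'\<in>set Ss'. cut E U P (g S') \<and> g S' \<inter> (U - C) = S'"
      by (metis bchoice)
    have CU: "C \<subseteq> U" using block_sub[OF p C] .
    have cC: "conn E C" using partD2[OF p C] .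
    obtain N where N: "cut E U P N" and Nsep: "\<And>i. i \<in> U \<Longrightarrow> (i \<in> N) = (i \<in> C) \<or> (i \<in> N) = (i \<notin> C)"
      and Nx: "\<And>i j. i \<in> U \<Longrightarrow> j \<in> U \<Longrightarrow> (i \<in> C) \<noteq> (j \<in> C) \<Longrightarrow> (i \<in> N) \<noteq> (j \<in> N)"
    proof (cases "src E U C")
      case True
      have "cut E U P C" unfolding cut_def
      proof (intro conjI)
        show "C \<subseteq> U" by (rule CU)
        show "conn E C" by (rule cC)
        show "conn E (U - C)" by (rule cUC)
        show "src E U C" by (rule True)
        show "\<forall>B\<in>P. B \<subseteq> C \<or> B \<inter> C = {}" using partD3[OF p _ C] by blast
      qed
      then show ?thesis using that[of C] by blast
    next
      case False
      then have sk: "snk E U C" using ss by simp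
      have "cut E U P (U - C)" unfolding cut_def
      proof (intro conjI)
        show "U - C \<subseteq> U" by blast
        show "conn E (U - C)" by (rule cUC)
        have "U - (U - C) = C" using CU by blast
        then show "conn E (U - (U - C))" using cC by simp
        show "src E U (U - C)" unfolding src_def
        proof (intro allI impI)
          fix i j assume ij: "(i,j) \<in> E" "i \<in> U" "j \<in> U - C"
          show "i \<in> U - C"
          proof (rule ccontr)
            assume "i \<notin> U - C"
            then have "i \<in> C" using ij by blast
            then have "j \<in> C" using sk ij unfolding snk_def by blast
            then show False using ij by blast
          qed
        qed
        show "\<forall>B\<in>P. B \<subseteq> U - C \<or> B \<inter> (U - C) = {}"
        proof
          fix B assume B: "B \<in> P"
          show "B \<subseteq> U - C \<or> B \<inter> (U - C) = {}"
          proof (cases "B = C")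
            case True then show ?thesis by blast
          next
            case False then show ?thesis using partD3[OF p B C False] block_sub[OF p B] by blast
          qed
        qed
      qed
      then show ?thesis using that[of "U - C"] by blast
    qed
    define Ss where "Ss = map g Ss' @ [N]"
    have "length Ss + 1 = card P" unfolding Ss_def using len' cardP' c2 by simp
    moreover have "\<forall>S\<in>set Ss. cut E U P S" unfolding Ss_def using g N by auto
    moreover have "\<forall>i j. (i,j) \<in> E \<longrightarrow> i \<in> U \<longrightarrow> j \<in> U \<longrightarrow> (\<exists>B\<in>P. i \<in> B \<and> j \<in> B) \<or> (\<exists>S\<in>set Ss. (i \<in> S) \<noteq> (j \<in> S))"
    proof (intro allI impI)
      fix i j assume ij: "(i,j) \<in> E" "i \<in> U" "j \<in> U"
      show "(\<exists>B\<in>P. i \<in> B \<and> j \<in> B) \<or> (\<exists>S\<in>set Ss. (i \<in> S) \<noteq> (j \<in> S))"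
      proof (cases "i \<in> C \<or> j \<in> C")
        case True
        show ?thesis
        proof (cases "i \<in> C \<and> j \<in> C")
          case True then show ?thesis using C by blast
        next
          case False
          then have "(i \<in> C) \<noteq> (j \<in> C)" using \<open>i \<in> C \<or> j \<in> C\<close> by blast
          then have "(i \<in> N) \<noteq> (j \<in> N)" using Nx ij(2,3) by blast
          then show ?thesis unfolding Ss_def by auto
        qed
      next
        case False
        then have "i \<in> U - C" "j \<in> U - C" using ij by auto
        then have "(\<exists>B\<in>P - {C}. i \<in> B \<and> j \<in> B) \<or> (\<exists>S\<in>set Ss'. (i \<in> S) \<noteq> (j \<in> S))"
          using cov' ij(1) by blast
        then show ?thesis
        proof
          assume "\<exists>B\<in>P - {C}. i \<in> B \<and> j \<in> B" then show ?thesis by blast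
        next
          assume "\<exists>S\<in>set Ss'. (i \<in> S) \<noteq> (j \<in> S)"
          then obtain S' where S': "S' \<in> set Ss'" "(i \<in> S') \<noteq> (j \<in> S')" by blast
          have "g S' \<inter> (U - C) = S'" using g S'(1) by blast
          then have "(i \<in> g S') \<noteq> (j \<in> g S')" using S'(2) \<open>i \<in> U - C\<close> \<open>j \<in> U - C\<close> by blast
          moreover have "g S' \<in> set Ss" unfolding Ss_def using S'(1) by simp
          ultimately show ?thesis by blast
        qed
      qed
    qed
    ultimately show ?thesis by blast
  qed
qed



lemma codim_iff:
  fixes G H :: "('n::finite) digraph"
  assumes "und_connected G"
  shows "face_codim (Qt H) (Qt G) d \<longleftrightarrow> Qt H face_of Qt G \<and> card (und_components H) = d + 1"
  using assms aff_dim_Qt[of G] aff_dim_Qt[of H] unfolding face_codim_def und_connected_def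
  by auto

definition Fc :: "'n digraph \<Rightarrow> 'n set \<Rightarrow> 'n digraph" where
  "Fc G S = {(k,l)\<in>G. (k \<in> S) = (l \<in> S)}"

lemma uc_side:
  assumes "(x,y) \<in> und_conn (Fc G S)"
  shows "(x \<in> S) = (y \<in> S)"
  using assms unfolding und_conn_def
  by (induction rule: rtrancl_induct) (auto simp: Fc_def)

lemma conn_uc:
  assumes "conn G S" "x \<in> S" "y \<in> S"
  shows "(x,y) \<in> und_conn (Fc G S)"
proof -
  have "(x,y) \<in> (RR G S)\<^sup>*" by (rule conn_D[OF assms])
  moreover have "RR G S \<subseteq> Fc G S \<union> (Fc G S)\<inverse>" unfolding RR_def Fc_def by auto
  ultimately show ?thesis unfolding und_conn_def by (rule subsetD[OF rtrancl_mono, rotated])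
qed

lemma Fc_compl: "Fc G (UNIV - S) = Fc G S"
  unfolding Fc_def by auto

lemma comps_Fc:
  assumes "conn G S" "conn G (UNIV - S)"
  shows "card (und_components (Fc G S)) = 2"
proof -
  have cls: "und_conn (Fc G S) `` {x} = (if x \<in> S then S else UNIV - S)" for x
  proof (cases "x \<in> S")
    case True
    have "und_conn (Fc G S) `` {x} = S"
    proof
      show "und_conn (Fc G S) `` {x} \<subseteq> S" using uc_side[of x _ G S] True by auto
      show "S \<subseteq> und_conn (Fc G S) `` {x}" using conn_uc[OF assms(1) True] by auto
    qed
    then show ?thesis using True by simp
  next
    case False
    have "und_conn (Fc G S) `` {x} = UNIV - S"
    proof
      show "und_conn (Fc G S) `` {x} \<subseteq> UNIV - S" using uc_side[of x _ G S] False by auto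
      show "UNIV - S \<subseteq> und_conn (Fc G S) `` {x}"
        using conn_uc[OF assms(2), of x] False unfolding Fc_compl by auto
    qed
    then show ?thesis using False by simp
  qed
  obtain s where s: "s \<in> S" using conn_ne[OF assms(1)] by blast
  obtain t where t: "t \<in> UNIV - S" using conn_ne[OF assms(2)] by blast
  have "und_components (Fc G S) = {S, UNIV - S}"
    unfolding und_components_def quotient_def
  proof
    have "und_conn (Fc G S) `` {x} \<in> {S, UNIV - S}" for x by (simp add: cls)
    then show "(\<Union>x\<in>UNIV. {und_conn (Fc G S) `` {x}}) \<subseteq> {S, UNIV - S}" by blast
    show "{S, UNIV - S} \<subseteq> (\<Union>x\<in>UNIV. {und_conn (Fc G S) `` {x}})"
      using cls[of s] cls[of t] s t by auto
  qed
  moreover have "S \<noteq> UNIV - S" using s by blast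
  ultimately show ?thesis by simp
qed

definition indv :: "'n set \<Rightarrow> real^('n::finite)" where
  "indv S = (\<chi> k. if k \<in> S then 0 else 1)"

lemma cut_facet:
  fixes G :: "('n::{finite,linorder}) digraph"
  assumes uc: "und_connected G" and c: "cut G UNIV P S"
  shows "is_facet_of (Qt (Fc G S)) (Qt G)"
proof -
  have cS: "conn G S" and cT: "conn G (UNIV - S)" and sS: "src G UNIV S"
    using c unfolding cut_def by auto
  have m: "monot G (indv S)" unfolding monot_def
  proof clarify
    fix k l assume kl: "(k,l) \<in> G"
    have "l \<in> S \<Longrightarrow> k \<in> S" using sS kl unfolding src_def by blast
    then show "indv S $ k \<le> indv S $ l" unfolding indv_def by auto
  qed
  have "T G (indv S) = Fc G S" unfolding T_def Fc_def indv_def by (auto split: if_splits)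
  then have "Qt (Fc G S) face_of Qt G" using F1[OF m] by simp
  then show ?thesis unfolding is_facet_of_def using codim_iff[OF uc] comps_Fc[OF cS cT] by simp
qed

lemma class_conn:
  assumes HG: "H \<subseteq> G" and B: "B = und_conn H `` {x}"
  shows "conn G B"
proof -
  have reach: "(x,y) \<in> (RR G B)\<^sup>*" if "(x,y) \<in> und_conn H" for y
    using that unfolding und_conn_def
  proof (induction rule: rtrancl_induct)
    case base then show ?case by simp
  next
    case (step w v)
    have "w \<in> B" "v \<in> B" using step(1,2) B unfolding und_conn_def
      by (auto intro: rtrancl.rtrancl_into_rtrancl)
    then have "(w,v) \<in> RR G B" using step(2) HG unfolding RR_def by auto
    then show ?case using step(3) by (rule rtrancl.rtrancl_into_rtrancl[rotated])
  qed
  show ?thesis unfolding conn_def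
  proof (intro conjI ballI)
    show "B \<noteq> {}" using B unfolding und_conn_def by auto
    fix p q assume "p \<in> B" "q \<in> B"
    then have "(x,p) \<in> und_conn H" "(x,q) \<in> und_conn H" using B by auto
    then have "(x,p) \<in> (RR G B)\<^sup>*" "(x,q) \<in> (RR G B)\<^sup>*" using reach by auto
    then show "(p,q) \<in> (RR G B)\<^sup>*" by (meson RR_sym rtrancl_trans)
  qed
qed

lemma uc_const:
  assumes "(x,y) \<in> und_conn (T G a)"
  shows "a$x = a$y"
  using assms unfolding und_conn_def
  by (induction rule: rtrancl_induct) (auto simp: T_def)

lemma part_H:
  fixes G :: "('n::finite) digraph"
  assumes m: "monot G a"
  shows "part G (\<lambda>i. a$i) UNIV (und_components (T G a))"
  unfolding part_def
proof (intro conjI)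
  let ?H = "T G a"
  have eq: "equiv UNIV (und_conn ?H)" by (rule equiv_uc)
  show "\<Union>(und_components ?H) = UNIV" unfolding und_components_def using Union_quotient[OF eq] .
  show "\<forall>B\<in>und_components ?H. conn G B"
  proof
    fix B assume "B \<in> und_components ?H"
    then obtain x where "B = und_conn ?H `` {x}" unfolding und_components_def by (auto elim: quotientE)
    then show "conn G B" by (intro class_conn[of ?H G]) (auto simp: T_def)
  qed
  show "\<forall>B\<in>und_components ?H. \<forall>B'\<in>und_components ?H. B \<noteq> B' \<longrightarrow> B \<inter> B' = {}"
    unfolding und_components_def using quotient_disj[OF eq] by blast
  show "\<forall>B\<in>und_components ?H. \<forall>x\<in>B. \<forall>y\<in>B. a$x = a$y"
  proof (intro ballI)
    fix B x y assume B: "B \<in> und_components ?H" and xy: "x \<in> B" "y \<in> B"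
    obtain z where "B = und_conn ?H `` {z}" using B unfolding und_components_def by (auto elim: quotientE)
    then have "(z,x) \<in> und_conn ?H" "(z,y) \<in> und_conn ?H" using xy by auto
    then have "a$z = a$x" "a$z = a$y" using uc_const by metis+
    then show "a$x = a$y" by simp
  qed
  show "\<forall>i j. (i,j) \<in> G \<longrightarrow> i \<in> UNIV \<longrightarrow> j \<in> UNIV \<longrightarrow>
      (\<exists>B\<in>und_components ?H. i \<in> B \<and> j \<in> B) \<or> a$i < a$j"
  proof (intro allI impI)
    fix i j assume ij: "(i,j) \<in> G"
    show "(\<exists>B\<in>und_components ?H. i \<in> B \<and> j \<in> B) \<or> a$i < a$j"
    proof (cases "a$i = a$j")
      case True
      then have "(i,j) \<in> ?H" using ij unfolding T_def by simp
      then have "(i,j) \<in> und_conn ?H" unfolding und_conn_def by auto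
      moreover have "und_conn ?H `` {i} \<in> und_components ?H" by (rule cls_in)
      moreover have "(i,i) \<in> und_conn ?H" unfolding und_conn_def by simp
      ultimately show ?thesis by blast
    next
      case False
      then have "a$i < a$j" using m ij unfolding monot_def by force
      then show ?thesis by simp
    qed
  qed
qed

lemma conn_UNIV:
  fixes G :: "('n::finite) digraph"
  assumes "und_connected G"
  shows "conn G UNIV"
proof -
  have eq: "equiv UNIV (und_conn G)" by (rule equiv_uc)
  obtain Q where Q: "und_components G = {Q}" using assms unfolding und_connected_def
    by (rule card_1_singletonE)
  have "\<Union>(und_components G) = UNIV" unfolding und_components_def using Union_quotient[OF eq] .
  then have QU: "Q = UNIV" using Q by simp
  have "und_conn G `` {x} = UNIV" for x using cls_in[of G x] Q QU by simp
  then have all: "(x,y) \<in> und_conn G" for x y by auto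
  have "RR G UNIV = G \<union> G\<inverse>" unfolding RR_def by auto
  then show ?thesis unfolding conn_def using all unfolding und_conn_def by simp
qed



lemma T_sum:
  fixes G :: "('n::finite) digraph" and b :: "nat \<Rightarrow> real^'n"
  assumes m: "\<And>i. i \<in> I \<Longrightarrow> monot G (b i)" and fin: "finite I" and ne: "I \<noteq> {}"
  shows "monot G (\<Sum>i\<in>I. b i)" and "T G (\<Sum>i\<in>I. b i) = (\<Inter>i\<in>I. T G (b i))"
proof -
  have le: "b i $ k \<le> b i $ l" if "i \<in> I" "(k,l) \<in> G" for i k l
    using m[OF that(1)] that(2) unfolding monot_def by blast
  show "monot G (\<Sum>i\<in>I. b i)" unfolding monot_def
  proof clarify
    fix k l assume kl: "(k,l) \<in> G"
    show "(\<Sum>i\<in>I. b i) $ k \<le> (\<Sum>i\<in>I. b i) $ l"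
      using le[OF _ kl] by (simp add: sum_mono)
  qed
  show "T G (\<Sum>i\<in>I. b i) = (\<Inter>i\<in>I. T G (b i))"
  proof
    show "T G (\<Sum>i\<in>I. b i) \<subseteq> (\<Inter>i\<in>I. T G (b i))"
    proof
      fix e assume e: "e \<in> T G (\<Sum>i\<in>I. b i)"
      then obtain k l where kl: "e = (k,l)" "(k,l) \<in> G" "(\<Sum>i\<in>I. b i $ k) = (\<Sum>i\<in>I. b i $ l)"
        unfolding T_def by auto
      have s0: "(\<Sum>i\<in>I. b i $ l - b i $ k) = 0" using kl(3) by (simp add: sum_subtractf)
      have nn: "\<And>i. i \<in> I \<Longrightarrow> 0 \<le> b i $ l - b i $ k" using le[OF _ kl(2)] by simp
      have z: "\<forall>i\<in>I. b i $ l - b i $ k = 0" by (rule iffD1[OF sum_nonneg_eq_0_iff[OF fin nn] s0])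
      show "e \<in> (\<Inter>i\<in>I. T G (b i))"
      proof
        fix i assume i: "i \<in> I"
        have "b i $ l - b i $ k = 0" using bspec[OF z i] .
        then have "b i $ k = b i $ l" by simp
        then show "e \<in> T G (b i)" using kl(1,2) unfolding T_def by simp
      qed
    qed
    show "(\<Inter>i\<in>I. T G (b i)) \<subseteq> T G (\<Sum>i\<in>I. b i)"
    proof
      fix e assume e: "e \<in> (\<Inter>i\<in>I. T G (b i))"
      obtain i0 where "i0 \<in> I" using ne by blast
      then have "e \<in> G" using e unfolding T_def by auto
      then obtain k l where kl: "e = (k,l)" "(k,l) \<in> G" by (cases e) auto
      have eqs: "b i $ k = b i $ l" if "i \<in> I" for i
      proof -
        have "e \<in> T G (b i)" using e that by blast
        then show ?thesis using kl(1) unfolding T_def by simp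
      qed
      have "(\<Sum>i\<in>I. b i $ k) = (\<Sum>i\<in>I. b i $ l)" by (rule sum.cong[OF refl eqs])
      then show "e \<in> T G (\<Sum>i\<in>I. b i)" using kl unfolding T_def by simp
    qed
  qed
qed

theorem mainTheorem14:
  fixes G H :: "('n::{finite,linorder}) digraph" and d :: nat
  assumes "is_dag_ord G" and "alternating G" and "und_connected G"
    and "d \<ge> 1" and "subgraph H G"
  shows "face_codim (Qt H) (Qt G) d \<longleftrightarrow>
    (card (und_components H) = d + 1 \<and>
     (\<exists>Hs :: nat \<Rightarrow> 'n digraph.
        (\<forall>i\<in>{1..d}. subgraph (Hs i) G \<and> is_facet_of (Qt (Hs i)) (Qt G)) \<and>
        H = (\<Inter>i\<in>{1..d}. Hs i)))"
proof -
  note dag = assms(1) and uc = assms(3) and d1 = assms(4)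
  have HG: "H \<subseteq> G" using assms(5) unfolding subgraph_def .
  show ?thesis
  proof
    assume L: "face_codim (Qt H) (Qt G) d"
    then have f: "Qt H face_of Qt G" and c: "card (und_components H) = d + 1"
      using codim_iff[OF uc] by auto
    obtain a where m: "monot G a" and Ha: "H = T G a" using F2[OF dag HG f] by blast
    have p: "part G (\<lambda>i. a$i) UNIV (und_components H)" using part_H[OF m] Ha by simp
    obtain Ss where len: "length Ss + 1 = card (und_components H)"
      and cuts: "\<forall>S\<in>set Ss. cut G UNIV (und_components H) S"
      and cov: "\<forall>i j. (i,j) \<in> G \<longrightarrow> i \<in> UNIV \<longrightarrow> j \<in> UNIV \<longrightarrow>
          (\<exists>B\<in>und_components H. i \<in> B \<and> j \<in> B) \<or> (\<exists>S\<in>set Ss. (i \<in> S) \<noteq> (j \<in> S))"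
      using CL[OF p conn_UNIV[OF uc]] by blast
    have lenS: "length Ss = d" using len c by simp
    define Hs where "Hs i = Fc G (Ss ! (i - 1))" for i
    have cutI: "cut G UNIV (und_components H) (Ss ! (i - 1))" if "i \<in> {1..d}" for i
    proof -
      have "i - 1 < length Ss" using that lenS by auto
      then show ?thesis using cuts nth_mem by blast
    qed
    have facets: "\<forall>i\<in>{1..d}. subgraph (Hs i) G \<and> is_facet_of (Qt (Hs i)) (Qt G)"
    proof
      fix i assume i: "i \<in> {1..d}"
      show "subgraph (Hs i) G \<and> is_facet_of (Qt (Hs i)) (Qt G)"
        unfolding subgraph_def Hs_def using cut_facet[OF uc cutI[OF i]] by (auto simp: Fc_def)
    qed
    have "H = (\<Inter>i\<in>{1..d}. Hs i)"
    proof
      show "H \<subseteq> (\<Inter>i\<in>{1..d}. Hs i)"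
      proof
        fix e assume e: "e \<in> H"
        then obtain k l where kl: "e = (k,l)" "(k,l) \<in> H" by (cases e) auto
        have klG: "(k,l) \<in> G" using kl HG by blast
        define B where "B = und_conn H `` {k}"
        have B: "B \<in> und_components H" unfolding B_def by (rule cls_in)
        have kB: "k \<in> B" "l \<in> B" unfolding B_def und_conn_def using kl by auto
        show "e \<in> (\<Inter>i\<in>{1..d}. Hs i)"
        proof
          fix i assume i: "i \<in> {1..d}"
          have "B \<subseteq> Ss ! (i - 1) \<or> B \<inter> Ss ! (i - 1) = {}"
            using cutI[OF i] B unfolding cut_def by blast
          then have "(k \<in> Ss ! (i - 1)) = (l \<in> Ss ! (i - 1))" using kB by blast
          then show "e \<in> Hs i" unfolding Hs_def Fc_def using kl klG by simp
        qed
      qed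
      show "(\<Inter>i\<in>{1..d}. Hs i) \<subseteq> H"
      proof
        fix e assume e: "e \<in> (\<Inter>i\<in>{1..d}. Hs i)"
        have "1 \<in> {1..d}" using d1 by simp
        then have "e \<in> Hs 1" using e by blast
        then obtain k l where kl: "e = (k,l)" "(k,l) \<in> G" unfolding Hs_def Fc_def by auto
        have "(\<exists>B\<in>und_components H. k \<in> B \<and> l \<in> B) \<or> (\<exists>S\<in>set Ss. (k \<in> S) \<noteq> (l \<in> S))"
          using spec[OF spec[OF cov, of k], of l] kl(2) by simp
        then show "e \<in> H"
        proof
          assume "\<exists>B\<in>und_components H. k \<in> B \<and> l \<in> B"
          then obtain B where B: "B \<in> und_components H" "k \<in> B" "l \<in> B" by blast
          obtain z where "B = und_conn H `` {z}" using B(1) unfolding und_components_def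
            by (auto elim: quotientE)
          then have "(z,k) \<in> und_conn H" "(z,l) \<in> und_conn H" using B by auto
          then have "(k,l) \<in> und_conn H" using uc_sym uc_trans by metis
          then have "a$k = a$l" using uc_const Ha by metis
          then show "e \<in> H" using kl Ha unfolding T_def by simp
        next
          assume "\<exists>S\<in>set Ss. (k \<in> S) \<noteq> (l \<in> S)"
          then obtain S where S: "S \<in> set Ss" "(k \<in> S) \<noteq> (l \<in> S)" by blast
          then obtain j where "j < length Ss" "Ss ! j = S" by (metis in_set_conv_nth)
          then have j: "j < length Ss" "(k \<in> Ss ! j) \<noteq> (l \<in> Ss ! j)" using S(2) by simp_all
          have "Suc j \<in> {1..d}" using j(1) lenS by simp
          then have "e \<in> Hs (Suc j)" using e by blast
          then have "(k \<in> Ss ! j) = (l \<in> Ss ! j)" unfolding Hs_def Fc_def using kl by simp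
          then show "e \<in> H" using j(2) by simp
        qed
      qed
    qed
    then show "card (und_components H) = d + 1 \<and>
     (\<exists>Hs :: nat \<Rightarrow> 'n digraph.
        (\<forall>i\<in>{1..d}. subgraph (Hs i) G \<and> is_facet_of (Qt (Hs i)) (Qt G)) \<and>
        H = (\<Inter>i\<in>{1..d}. Hs i))" using c facets by blast
  next
    assume R: "card (und_components H) = d + 1 \<and>
     (\<exists>Hs :: nat \<Rightarrow> 'n digraph.
        (\<forall>i\<in>{1..d}. subgraph (Hs i) G \<and> is_facet_of (Qt (Hs i)) (Qt G)) \<and>
        H = (\<Inter>i\<in>{1..d}. Hs i))"
    then have c: "card (und_components H) = d + 1" by simp
    from R obtain Hs :: "nat \<Rightarrow> 'n digraph" where
      Hs: "\<forall>i\<in>{1..d}. subgraph (Hs i) G \<and> is_facet_of (Qt (Hs i)) (Qt G)"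
      and HI: "H = (\<Inter>i\<in>{1..d}. Hs i)" by blast
    have "\<forall>i\<in>{1..d}. \<exists>b. monot G b \<and> Hs i = T G b"
    proof
      fix i assume i: "i \<in> {1..d}"
      have sg: "Hs i \<subseteq> G" using Hs i unfolding subgraph_def by blast
      have "Qt (Hs i) face_of Qt G" using Hs i unfolding is_facet_of_def face_codim_def by blast
      then show "\<exists>b. monot G b \<and> Hs i = T G b" using F2[OF dag sg] by blast
    qed
    then obtain b where b: "\<forall>i\<in>{1..d}. monot G (b i) \<and> Hs i = T G (b i)"
      by (metis bchoice)
    have ne: "{1..d} \<noteq> {}" using d1 by simp
    have mb: "\<And>i. i \<in> {1..d} \<Longrightarrow> monot G (b i)" using b by blast
    have ms: "monot G (\<Sum>i\<in>{1..d}. b i)" by (rule T_sum(1)[OF mb finite_atLeastAtMost ne])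
    have "H = (\<Inter>i\<in>{1..d}. T G (b i))" unfolding HI using b by auto
    also have "\<dots> = T G (\<Sum>i\<in>{1..d}. b i)" by (rule T_sum(2)[OF mb finite_atLeastAtMost ne, symmetric])
    finally have "Qt H face_of Qt G" using F1[OF ms] by simp
    then show "face_codim (Qt H) (Qt G) d" using codim_iff[OF uc] c by simp
  qed
qed


end
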